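(* Let $g(x)=F_2(x,x,x)$ for $x\ge0$ and $q(x)=x+\frac{f(x)}{f'(x)}$. If $g$ has no $2$-cycle (no $x\ne y$ in $[0,\infty)$ with $g(x)=y$, $g(y)=x$) and $q(x)>-\frac{h}{b}\left(1+\frac1b\right)$ for all $x\ge0$, then the unique positive equilibrium $\bar x$ of $x_{n+1}=x_nf(x_{n-2})+h$ is globally attracting: every solution with initial values $x_{-2},x_{-1},x_0\ge0$ converges to $\bar x$.
   Context: Let $h>0$ and $f:[0,\infty)\to(0,\infty)$ be differentiable with $f'(x)<0$ for all $x\ge 0$, $\lim_{t\to\infty}tf(t)=0$, and $b:=f(0)$ (so $f\le b$). $F_2(x,y,z)=xf(x)f(y)f(z)+hf(x)f(y)+hf(x)+h$ is the twice-expanded map of $F_0(x,y,z)=xf(z)+h$, and $\bar x$ is the unique solution in $[0,\infty)$ of $x=xf(x)+h$. *)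

theory Defs
  imports Complex_Main
begin

text \<open>Twice-expanded map of F0(x,y,z) = x f(z) + h.\<close>
definition F2 :: "(real \<Rightarrow> real) \<Rightarrow> real \<Rightarrow> real \<Rightarrow> real \<Rightarrow> real \<Rightarrow> real" where
  "F2 f h x y z = x * f x * f y * f z + h * f x * f y + h * f x + h"

definition gmap :: "(real \<Rightarrow> real) \<Rightarrow> real \<Rightarrow> real \<Rightarrow> real" where
  "gmap f h x = F2 f h x x x"

definition qmap :: "(real \<Rightarrow> real) \<Rightarrow> (real \<Rightarrow> real) \<Rightarrow> real \<Rightarrow> real" where
  "qmap f f' x = x + f x / f' x"

end

theory Submission imports Defs begin

lemma antitone_deriv:
  fixes \<phi> \<phi>' :: "real \<Rightarrow> real"
  assumes d: "\<And>t. t \<ge> 0 \<Longrightarrow> (\<phi> has_real_derivative \<phi>' t) (at t within {0..})"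
    and n: "\<And>t. t \<ge> 0 \<Longrightarrow> \<phi>' t \<le> 0" and "0 \<le> a" "a \<le> b"
  shows "\<phi> b \<le> \<phi> a"
proof (rule DERIV_nonpos_imp_decreasing_open[OF \<open>a \<le> b\<close>])
  fix t assume t: "a < t" "t < b"
  then have "t > 0" using assms by auto
  have "(\<phi> has_real_derivative \<phi>' t) (at t within {0<..})"
    by (rule has_field_derivative_subset[OF d]) (use \<open>t>0\<close> in auto)
  then have "(\<phi> has_real_derivative \<phi>' t) (at t)"
    using at_within_open[of t "{0<..}"] \<open>t>0\<close> by auto
  then show "\<exists>y. (\<phi> has_real_derivative y) (at t) \<and> y \<le> 0" using n \<open>t>0\<close> by auto
next
  show "continuous_on {a..b} \<phi>"
    by (rule DERIV_continuous_on[of _ _ \<phi>'], rule has_field_derivative_subset[OF d]) (use assms in auto)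
qed

locale setting =
  fixes f f' :: "real \<Rightarrow> real" and h b :: real
  assumes h_pos: "h > 0"
    and f_pos: "\<And>t. t \<ge> 0 \<Longrightarrow> f t > 0"
    and f_deriv: "\<And>t. t \<ge> 0 \<Longrightarrow> (f has_real_derivative f' t) (at t within {0..})"
    and f'_neg: "\<And>t. t \<ge> 0 \<Longrightarrow> f' t < 0"
    and b_def: "b = f 0"
    and q_bound: "\<And>t. t \<ge> 0 \<Longrightarrow> qmap f f' t > - (h / b) * (1 + 1 / b)"
begin

lemma f_anti: "0 \<le> s \<Longrightarrow> s \<le> t \<Longrightarrow> f t \<le> f s"
  by (rule antitone_deriv[of f f']) (use f_deriv f'_neg in \<open>auto intro: less_imp_le\<close>)

lemma f_le_b: "0 \<le> t \<Longrightarrow> f t \<le> b"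
  using f_anti[of 0 t] b_def by auto

lemma b_pos: "b > 0" using f_pos[of 0] b_def by auto

lemma F2_x: assumes "0 \<le> a" "a \<le> a'" "0 \<le> y" "0 \<le> z"
  shows "F2 f h a' y z \<le> F2 f h a y z"
proof -
  let ?A = "f y * f z" and ?B = "f y + 1"
  have fy: "0 < f y" "f y \<le> b" using f_pos f_le_b assms by auto
  have fz: "0 < f z" "f z \<le> b" using f_pos f_le_b assms by auto
  have key: "(f s + s * f' s) * ?A + h * f' s * f y + h * f' s \<le> 0" if s: "s \<ge> 0" for s
  proof -
    have fs: "f' s < 0" "f s > 0" using f'_neg f_pos s by auto
    define q where "q = s + f s / f' s"
    have qb: "q > - (h / b) * (1 + 1 / b)" using q_bound[OF s] by (simp add: qmap_def q_def)
    have eq: "(f s + s * f' s) * ?A + h * f' s * f y + h * f' s = f' s * (q * ?A + h * ?B)"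
      using fs by (simp add: q_def field_simps)
    have pos: "q * ?A + h * ?B > 0"
    proof (cases "q \<ge> 0")
      case True then show ?thesis using fy fz h_pos by (simp add: add_nonneg_pos)
    next
      case False
      have "q * ?A = (q * f y) * f z" by simp
      also have "\<dots> \<ge> (q * f y) * b"
        using False fy fz by (intro mult_left_mono_neg) (auto intro: mult_nonpos_nonneg)
      finally have 1: "q * ?A \<ge> q * f y * b" .
      have "q * f y * b = (q * b) * f y" by simp
      also have "q * b > - h * (1 + 1/b)" using qb b_pos
        by (simp add: field_simps)
      then have "(q * b) * f y > (- h * (1 + 1/b)) * f y" using fy by (intro mult_strict_right_mono) auto
      finally have 2: "q * f y * b > - h * f y - h * (f y / b)" by (simp add: algebra_simps)
      have "f y / b \<le> 1" using fy b_pos by simp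
      then have "h * (f y / b) \<le> h * 1" using h_pos by (intro mult_left_mono) auto
      with 1 2 show ?thesis by (simp add: algebra_simps)
    qed
    show ?thesis unfolding eq using fs pos by (simp add: mult_neg_pos less_imp_le)
  qed
  have d: "((\<lambda>s. s * f s * ?A + h * f s * f y + h * f s + h) has_real_derivative
       ((f s + s * f' s) * ?A + h * f' s * f y + h * f' s)) (at s within {0..})" if "s \<ge> 0" for s
    by (rule derivative_eq_intros refl f_deriv[OF that] | simp)+
  have "(\<lambda>s. s * f s * ?A + h * f s * f y + h * f s + h) a' \<le> (\<lambda>s. s * f s * ?A + h * f s * f y + h * f s + h) a"
    by (rule antitone_deriv[OF d key]) (use assms in auto)
  then show ?thesis unfolding F2_def by (simp add: mult.assoc)
qed

lemma e1: "F2 f h a w z = f w * (a*f a*f z + h*f a) + h*f a + h" by (simp add: F2_def algebra_simps)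
lemma e2: "F2 f h a y w = f w * (a*f a*f y) + h * f a * f y + h*f a + h" by (simp add: F2_def algebra_simps)

lemma F2_y: assumes "0 \<le> a" "0 \<le> y" "y \<le> y'" "0 \<le> z"
  shows "F2 f h a y' z \<le> F2 f h a y z"
proof -
  have p: "f a > 0" "f z > 0" using assms f_pos by auto
  have c: "a * f a * f z + h * f a \<ge> 0" using assms p h_pos by simp
  have "f y' \<le> f y" using f_anti assms by auto
  then have "f y' * (a * f a * f z + h * f a) \<le> f y * (a * f a * f z + h * f a)"
    using c by (rule mult_right_mono)
  then show ?thesis using e1[of a y' z] e1[of a y z] by linarith
qed

lemma F2_z: assumes "0 \<le> a" "0 \<le> y" "0 \<le> z" "z \<le> z'"
  shows "F2 f h a y z' \<le> F2 f h a y z"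
proof -
  have p: "f a > 0" "f y > 0" using assms f_pos by auto
  have c: "a * f a * f y \<ge> 0" using assms p by simp
  have "f z' \<le> f z" using f_anti assms by auto
  then have "f z' * (a * f a * f y) \<le> f z * (a * f a * f y)"
    using c by (rule mult_right_mono)
  then show ?thesis using e2[of a y z'] e2[of a y z] by linarith
qed

lemma sandwich:
  assumes "0 \<le> L" "L \<le> a" "a \<le> U" "L \<le> y" "y \<le> U" "L \<le> z" "z \<le> U"
  shows "gmap f h U \<le> F2 f h a y z \<and> F2 f h a y z \<le> gmap f h L"
proof
  have "F2 f h U U U \<le> F2 f h a U U" using F2_x assms by auto
  also have "\<dots> \<le> F2 f h a y U" using F2_y assms by auto
  also have "\<dots> \<le> F2 f h a y z" using F2_z assms by auto
  finally show "gmap f h U \<le> F2 f h a y z" by (simp add: gmap_def)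
  have "F2 f h a y z \<le> F2 f h L y z" using F2_x assms by auto
  also have "\<dots> \<le> F2 f h L L z" using F2_y assms by auto
  also have "\<dots> \<le> F2 f h L L L" using F2_z assms by auto
  finally show "F2 f h a y z \<le> gmap f h L" by (simp add: gmap_def)
qed

lemma g_anti: "0 \<le> u \<Longrightarrow> u \<le> v \<Longrightarrow> gmap f h v \<le> gmap f h u"
  using sandwich[of u u v v v] by (auto simp: gmap_def)

lemma g_nonneg: "0 \<le> u \<Longrightarrow> 0 \<le> gmap f h u"
  using f_pos[of u] h_pos by (simp add: gmap_def F2_def)

lemma g_cont: "continuous_on {0..} (gmap f h)"
proof -
  have "continuous_on {0..} f"
    by (rule DERIV_continuous_on[of _ _ f']) (use f_deriv in auto)
  then have "continuous_on {0..} (\<lambda>x. x * f x * f x * f x + h * f x * f x + h * f x + h)"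
    by (intro continuous_intros)
  moreover have "gmap f h = (\<lambda>x. x * f x * f x * f x + h * f x * f x + h * f x + h)"
    by (rule ext) (simp add: gmap_def F2_def)
  ultimately show ?thesis by (simp only:)
qed

end
theorem mainTheorem13:
  fixes f f' :: "real \<Rightarrow> real" and h b xbar :: real and x :: "nat \<Rightarrow> real"
  assumes h_pos: "h > 0"
    and f_pos: "\<And>t. t \<ge> 0 \<Longrightarrow> f t > 0"
    and f_deriv: "\<And>t. t \<ge> 0 \<Longrightarrow> (f has_real_derivative f' t) (at t within {0..})"
    and f'_neg: "\<And>t. t \<ge> 0 \<Longrightarrow> f' t < 0"
    and f_lim: "((\<lambda>t. t * f t) \<longlongrightarrow> 0) at_top"
    and b_def: "b = f 0"
    and xbar_nonneg: "xbar \<ge> 0"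
    and xbar_eq: "xbar = xbar * f xbar + h"
    and no_2cycle: "\<not> (\<exists>u v. u \<ge> 0 \<and> v \<ge> 0 \<and> u \<noteq> v \<and> gmap f h u = v \<and> gmap f h v = u)"
    and q_bound: "\<And>t. t \<ge> 0 \<Longrightarrow> qmap f f' t > - (h / b) * (1 + 1 / b)"
    and init: "x 0 \<ge> 0" "x 1 \<ge> 0" "x 2 \<ge> 0"
    and recur: "\<And>n. x (n + 3) = x (n + 2) * f (x n) + h"
  shows "x \<longlonglongrightarrow> xbar"
proof -
  interpret setting f f' h b
    using h_pos f_pos f_deriv f'_neg b_def q_bound by unfold_locales auto
  define g where "g = gmap f h"
  have xnn: "x n \<ge> 0" for n
  proof (induction n rule: less_induct)
    case (less n)
    show ?case
    proof (cases "n < 3")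
      case True then have "n = 0 \<or> n = 1 \<or> n = 2" by auto
      then show ?thesis using init by auto
    next
      case False
      then obtain m where m: "n = m + 3" by (metis add.commute le_Suc_ex not_less)
      have "x m \<ge> 0" "x (m+2) \<ge> 0" using less m by auto
      then have "f (x m) > 0" using f_pos by auto
      then show ?thesis using m recur[of m] \<open>x (m+2) \<ge> 0\<close> h_pos by simp
    qed
  qed
  have exp: "x (n + 5) = F2 f h (x (n+2)) (x (n+1)) (x n)" for n
  proof -
    have e: "n+2+3 = n+5" "n+2+2 = n+4" "n+1+3 = n+4" "n+1+2 = n+3" by simp_all
    have "x (n + 5) = x (n+4) * f (x (n+2)) + h" using recur[of "n+2"] unfolding e .
    moreover have "x (n + 4) = x (n+3) * f (x (n+1)) + h" using recur[of "n+1"] unfolding e .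
    moreover have "x (n + 3) = x (n+2) * f (x n) + h" using recur[of n] by simp
    ultimately show ?thesis by (simp add: F2_def algebra_simps)
  qed
  have gx: "g xbar = xbar"
  proof -
    have "g xbar = ((xbar * f xbar + h) * f xbar + h) * f xbar + h"
      by (simp add: g_def gmap_def F2_def algebra_simps)
    then show ?thesis using xbar_eq by simp
  qed
  define LU where "LU = rec_nat (0, g 0) (\<lambda>k p. (g (snd p), g (fst p)))"
  define Lk where "Lk k = fst (LU k)" for k
  define Uk where "Uk k = snd (LU k)" for k
  have L0: "Lk 0 = 0" and U0: "Uk 0 = g 0" by (simp_all add: Lk_def Uk_def LU_def)
  have LS: "Lk (Suc k) = g (Uk k)" and US: "Uk (Suc k) = g (Lk k)" for k
    by (simp_all add: Lk_def Uk_def LU_def)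
  have mono: "0 \<le> Lk k \<and> Lk k \<le> Lk (Suc k) \<and> Lk (Suc k) \<le> Uk (Suc k) \<and> Uk (Suc k) \<le> Uk k" for k
  proof (induction k)
    case 0
    have "0 \<le> g 0" using g_nonneg by (simp add: g_def)
    then have "g (g 0) \<le> g 0" using g_anti[of 0 "g 0"] by (simp add: g_def)
    moreover have "0 \<le> g (g 0)" using g_nonneg \<open>0 \<le> g 0\<close> by (simp add: g_def)
    ultimately show ?case by (simp add: L0 U0 LS US)
  next
    case (Suc k)
    then have a: "0 \<le> Lk (Suc k)" by auto
    have 1: "g (Uk k) \<le> g (Uk (Suc k))" using g_anti Suc by (simp add: g_def)
    have 2: "g (Uk (Suc k)) \<le> g (Lk (Suc k))" using g_anti Suc by (simp add: g_def)
    have 3: "g (Lk (Suc k)) \<le> g (Lk k)" using g_anti Suc by (simp add: g_def)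
    show ?case using a 1 2 3 by (simp add: LS[of "Suc k"] US[of "Suc k"] LS[of k] US[of k])
  qed
  have trap: "\<exists>N. \<forall>n\<ge>N. Lk k \<le> x n \<and> x n \<le> Uk k" for k
  proof (induction k)
    case 0
    have "\<forall>n\<ge>5. Lk 0 \<le> x n \<and> x n \<le> Uk 0"
    proof (intro allI impI)
      fix n :: nat assume "5 \<le> n"
      define m where "m = n - 5"
      have m: "n = m + 5" using \<open>5 \<le> n\<close> by (simp add: m_def)
      let ?M = "max (x (m+2)) (max (x (m+1)) (x m))"
      have "F2 f h (x (m+2)) (x (m+1)) (x m) \<le> gmap f h 0"
        using sandwich[of 0 "x (m+2)" ?M "x (m+1)" "x m"] xnn by auto
      then show "Lk 0 \<le> x n \<and> x n \<le> Uk 0" using xnn[of n] m exp[of m] by (simp add: L0 U0 g_def)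
    qed
    then show ?case by blast
  next
    case (Suc k)
    then obtain N where N: "\<forall>n\<ge>N. Lk k \<le> x n \<and> x n \<le> Uk k" by blast
    have "\<forall>n\<ge>N+5. Lk (Suc k) \<le> x n \<and> x n \<le> Uk (Suc k)"
    proof (intro allI impI)
      fix n :: nat assume "N + 5 \<le> n"
      define m where "m = n - 5"
      have m: "n = m + 5" and mN: "m \<ge> N" using \<open>N + 5 \<le> n\<close> by (simp_all add: m_def)
      have "gmap f h (Uk k) \<le> F2 f h (x (m+2)) (x (m+1)) (x m) \<and> F2 f h (x (m+2)) (x (m+1)) (x m) \<le> gmap f h (Lk k)"
        using sandwich[of "Lk k" "x (m+2)" "Uk k" "x (m+1)" "x m"] N mN mono[of k] by auto
      then show "Lk (Suc k) \<le> x n \<and> x n \<le> Uk (Suc k)" using m exp[of m] by (simp add: LS US g_def)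
    qed
    then show ?case by blast
  qed
  have xb: "Lk k \<le> xbar \<and> xbar \<le> Uk k" for k
  proof (induction k)
    case 0
    have "gmap f h xbar \<le> gmap f h 0" using g_anti xbar_nonneg by auto
    then show ?case using gx xbar_nonneg by (simp add: L0 U0 g_def)
  next
    case (Suc k)
    have 1: "g (Uk k) \<le> g xbar" using g_anti Suc xbar_nonneg by (simp add: g_def)
    have 2: "g xbar \<le> g (Lk k)" using g_anti Suc mono[of k] by (simp add: g_def)
    show ?case using 1 2 gx by (simp add: LS US)
  qed
  have incL: "incseq Lk" using mono by (intro incseq_SucI) auto
  have decU: "decseq Uk" using mono by (intro decseq_SucI) auto
  have LU_le: "Lk k \<le> Uk k" for k
    using mono[of k] incL decU by (meson incseqD decseqD le_Suc_eq order_trans)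
  have bdA: "bdd_above (range Lk)"
  proof (rule bdd_aboveI[of _ "Uk 0"])
    fix y assume "y \<in> range Lk"
    then obtain k where "y = Lk k" by auto
    moreover have "Uk k \<le> Uk 0" using decseqD[OF decU, of 0 k] by simp
    ultimately show "y \<le> Uk 0" using LU_le[of k] by simp
  qed
  have U0le: "0 \<le> Uk k" for k using LU_le[of k] mono[of k] by linarith
  have bdB: "bdd_below (range Uk)"
    by (rule bdd_belowI[of _ 0]) (use U0le in auto)
  define A where "A = (SUP k. Lk k)"
  define B where "B = (INF k. Uk k)"
  have LA: "Lk \<longlonglongrightarrow> A" unfolding A_def by (rule LIMSEQ_incseq_SUP[OF bdA incL])
  have UB: "Uk \<longlonglongrightarrow> B" unfolding B_def by (rule LIMSEQ_decseq_INF[OF bdB decU])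
  have A0: "A \<ge> 0" using incseq_le[OF incL LA, of 0] mono[of 0] by auto
  have AB: "A \<le> B" by (rule LIMSEQ_le[OF LA UB]) (use LU_le in auto)
  have Uge: "\<forall>\<^sub>F k in sequentially. Uk k \<in> {0..}" using U0le by (auto intro!: always_eventually)
  have Lge: "\<forall>\<^sub>F k in sequentially. Lk k \<in> {0..}" using mono by (auto intro!: always_eventually)
  have "(\<lambda>k. g (Uk k)) \<longlonglongrightarrow> g B"
    unfolding g_def by (rule continuous_on_tendsto_compose[OF g_cont UB]) (use A0 AB Uge in auto)
  moreover have "(\<lambda>k. g (Uk k)) \<longlonglongrightarrow> A" using LIMSEQ_Suc[OF LA] by (simp add: LS)
  ultimately have gB: "g B = A" using LIMSEQ_unique by blast
  have "(\<lambda>k. g (Lk k)) \<longlonglongrightarrow> g A"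
    unfolding g_def by (rule continuous_on_tendsto_compose[OF g_cont LA]) (use A0 Lge in auto)
  moreover have "(\<lambda>k. g (Lk k)) \<longlonglongrightarrow> B" using LIMSEQ_Suc[OF UB] by (simp add: US)
  ultimately have gA: "g A = B" using LIMSEQ_unique by blast
  have AeqB: "A = B"
  proof (rule ccontr)
    assume "A \<noteq> B"
    then have "\<exists>u v. u \<ge> 0 \<and> v \<ge> 0 \<and> u \<noteq> v \<and> gmap f h u = v \<and> gmap f h v = u"
      using gA gB A0 AB unfolding g_def by (intro exI[of _ A] exI[of _ B]) auto
    then show False using no_2cycle by blast
  qed
  have "A \<le> xbar" by (rule LIMSEQ_le_const2[OF LA]) (use xb in auto)
  moreover have "xbar \<le> B" by (rule LIMSEQ_le_const[OF UB]) (use xb in auto)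
  ultimately have Ax: "A = xbar" "B = xbar" using AeqB by auto
  show ?thesis
  proof (rule LIMSEQ_I)
    fix r :: real assume r: "r > 0"
    obtain k1 where k1: "\<forall>k\<ge>k1. norm (Lk k - xbar) < r" using LIMSEQ_D[OF LA r] Ax by auto
    obtain k2 where k2: "\<forall>k\<ge>k2. norm (Uk k - xbar) < r" using LIMSEQ_D[OF UB r] Ax by auto
    obtain N where N: "\<forall>n\<ge>N. Lk (max k1 k2) \<le> x n \<and> x n \<le> Uk (max k1 k2)" using trap by blast
    have "norm (Lk (max k1 k2) - xbar) < r" "norm (Uk (max k1 k2) - xbar) < r" using k1 k2 by auto
    then have "\<forall>n\<ge>N. norm (x n - xbar) < r" using N by (auto simp: abs_less_iff)
    then show "\<exists>N. \<forall>n\<ge>N. norm (x n - xbar) < r" by blast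
  qed
qed

end
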